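(* Under Strategy 1 (described in the context), let $U_h(\omega)$ be the number of uncles created during the attack cycle $\omega$ that are referred by nephew blocks mined by the honest miners, in $\omega$ or in a later cycle. Then $$\mathbb{E}[U_h]=p^2q+\bigl(p+(1-\gamma)p^2q\bigr)\left(\frac{q^2}{p}\bigl(1-q^{n_1-1}\bigr)\gamma+(1-\gamma)pq^2\,\frac{1-(pq)^{n_1-1}}{1-pq}\right).$$
   Context: Honest hashrate $p$, attacker hashrate $q$, $p+q=1$, $0<q<p$; $\gamma\in[0,1]$ is the fraction of honest hashrate mining on the attacker's block during a public competition between equal-height blocks. Attack cycles are i.i.d. words in S (attacker block) and H (honest block): H, SHS, SHH, or SSwH with $w$ a Dyck word; $\mathbb{P}[H]=p$, $\mathbb{P}[SHS]=pq^2$, $\mathbb{P}[SHH]=p^2q$, $\mathbb{P}[SSwH]=q^2p(pq)^{|w|}$ ($|w|$ half the length of $w$). In SHH the second honest block is built on the attacker's block with probability $\gamma$ and on the first honest block with probability $1-\gamma$. Ethereum rules: an uncle is a non-official block whose parent is official; a nephew (official block) may refer an uncle at distance (height difference) at most $n_1$ ($n_1\ge2$ an integer). Strategy 1: the attacker withholds his blocks, and each time the honest miners publish a block he publishes the part of his secret fork of the same height as the public honest chain (a fraction $\gamma$ of honest hashrate then mines on the attacker's branch); the attacker's fork wins in cycles starting with SS; all miners refer all possible uncles. *)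

theory Defs
  imports "HOL-Analysis.Analysis"
begin

(* Letters of an attack cycle: True = S (attacker block), False = H (honest block). *)

definition count_S :: "bool list \<Rightarrow> nat" where
  "count_S w = length (filter id w)"

definition count_H :: "bool list \<Rightarrow> nat" where
  "count_H w = length (filter Not w)"

definition dyck :: "bool list \<Rightarrow> bool" where
  "dyck w \<longleftrightarrow> count_S w = count_H w \<and>
     (\<forall>k\<le>length w. count_H (take k w) \<le> count_S (take k w))"

definition valid_cycle :: "bool list \<Rightarrow> bool" where
  "valid_cycle w \<longleftrightarrow> w = [False] \<or> w = [True, False, True] \<or> w = [True, False, False]
     \<or> (\<exists>v. dyck v \<and> w = True # True # v @ [False])"

(* Probability of a cycle word: P[H]=p, P[SHS]=pq^2, P[SHH]=p^2q, P[SSwH]=q^2p(pq)^|w|,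
   i.e. q^(#S) p^(#H) on valid cycles. *)
definition cycle_prob :: "real \<Rightarrow> real \<Rightarrow> bool list \<Rightarrow> real" where
  "cycle_prob p q w = (if valid_cycle w then q ^ count_S w * p ^ count_H w else 0)"

(* A cycle outcome is a word together with one independent gamma-coin per honest block:
   coin i (0-based, for the (i+1)-th honest block) = True means that this honest block was mined
   by the fraction gamma of honest hashrate working on the attacker's (published) competing block. *)
definition outcome_prob :: "real \<Rightarrow> real \<Rightarrow> real \<Rightarrow> bool list \<times> bool list \<Rightarrow> real" where
  "outcome_prob p q \<gamma> wc = (case wc of (w, c) \<Rightarrow>
     if length c = count_H w
     then cycle_prob p q w * (\<Prod>b\<leftarrow>c. if b then \<gamma> else 1 - \<gamma>)
     else 0)"

(* Blocks created during a cycle. Heights are relative to the last official block before the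
   cycle (height 0); times are positions in the cycle word. *)
record blk =
  honest :: bool
  height :: nat
  mined :: nat
  published :: nat
  official :: bool
  parent_official :: bool

(* Cycles where the attacker's fork wins (SHS and SSwH) under Strategy 1:
   the j-th attacker block has height j and is official; the i-th honest block has height i,
   is published when mined, is orphaned, and its parent is official iff i = 1 or it was mined
   on the attacker's block of height i-1 (gamma-coin). *)
definition fork_blocks :: "bool list \<Rightarrow> bool list \<Rightarrow> blk list" where
  "fork_blocks w c = map (\<lambda>k.
     if w ! k then
       \<lparr>honest = False, height = count_S (take (Suc k) w), mined = k, published = k,
        official = True, parent_official = True\<rparr>
     else
       \<lparr>honest = True, height = count_H (take (Suc k) w), mined = k, published = k,
        official = False,
        parent_official = (count_H (take (Suc k) w) = 1 \<or> c ! (count_H (take (Suc k) w) - 1))\<rparr>)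
     [0..<length w]"

definition cycle_blocks :: "bool list \<Rightarrow> bool list \<Rightarrow> blk list" where
  "cycle_blocks w c =
    (if w = [False] then
       [\<lparr>honest = True, height = 1, mined = 0, published = 0, official = True, parent_official = True\<rparr>]
     else if w = [True, False, False] then
       (if c ! 1 then
          [\<lparr>honest = False, height = 1, mined = 0, published = 1, official = True, parent_official = True\<rparr>,
           \<lparr>honest = True, height = 1, mined = 1, published = 1, official = False, parent_official = True\<rparr>,
           \<lparr>honest = True, height = 2, mined = 2, published = 2, official = True, parent_official = True\<rparr>]
        else
          [\<lparr>honest = False, height = 1, mined = 0, published = 1, official = False, parent_official = True\<rparr>,
           \<lparr>honest = True, height = 1, mined = 1, published = 1, official = True, parent_official = True\<rparr>,
           \<lparr>honest = True, height = 2, mined = 2, published = 2, official = True, parent_official = True\<rparr>])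
     else fork_blocks w c)"

(* Number of blocks added to the official chain by a cycle. *)
definition growth :: "bool list \<Rightarrow> nat" where
  "growth w = (if w = [False] then 1 else if w = [True, False, False] then 2 else count_S w)"

definition shift_blk :: "nat \<Rightarrow> nat \<Rightarrow> blk \<Rightarrow> blk" where
  "shift_blk dh dt b = b\<lparr>height := height b + dh, mined := mined b + dt,
                         published := published b + dt\<rparr>"

definition is_uncle :: "blk \<Rightarrow> bool" where
  "is_uncle u \<longleftrightarrow> \<not> official u \<and> parent_official u"

definition can_refer :: "nat \<Rightarrow> blk \<Rightarrow> blk \<Rightarrow> bool" where
  "can_refer n1 b u \<longleftrightarrow> official b \<and> published u < mined b \<and>
     height u < height b \<and> height b \<le> height u + n1"

(* Since all miners refer all possible uncles, an uncle is referred by the lowest official block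
   that can refer it. *)
definition U_h :: "nat \<Rightarrow> bool list \<times> bool list \<Rightarrow> bool list \<times> bool list \<Rightarrow> nat" where
  "U_h n1 \<omega> \<omega>' = (case \<omega> of (w, c) \<Rightarrow> case \<omega>' of (w', c') \<Rightarrow>
     (let B = cycle_blocks w c @ map (shift_blk (growth w) (length w)) (cycle_blocks w' c')
      in length (filter (\<lambda>u. is_uncle u \<and>
           (\<exists>b\<in>set B. can_refer n1 b u \<and> honest b \<and>
              (\<forall>b'\<in>set B. can_refer n1 b' u \<longrightarrow> height b \<le> height b')))
         (cycle_blocks w c))))"

end

theory Submission
  imports Defs
begin


lemma has_sum_Sigma_nonneg:
  fixes f :: "'a \<times> 'b \<Rightarrow> real"
  assumes nn: "\<And>z. 0 \<le> f z"
    and inner: "\<And>x. x \<in> A \<Longrightarrow> ((\<lambda>y. f (x,y)) has_sum b x) (B x)"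
    and outer: "(b has_sum a) A"
  shows "(f has_sum a) (Sigma A B)"
proof -
  have bnn: "x \<in> A \<Longrightarrow> 0 \<le> b x" for x
    using has_sum_nonneg[OF inner] nn by blast
  have "Infinite_Sum.abs_summable_on f (Sigma A B)"
  proof (rule Infinite_Sum.abs_summable_on_Sigma_iff[THEN iffD2], intro conjI ballI)
    fix x assume x: "x \<in> A"
    show "Infinite_Sum.abs_summable_on (\<lambda>y. f (x, y)) (B x)"
      using inner[OF x] nn by (simp add: has_sum_imp_summable)
  next
    have "(\<lambda>x. \<Sum>\<^sub>\<infinity>y\<in>B x. norm (f (x, y))) summable_on A"
    proof (rule summable_on_cong[THEN iffD2])
      show "\<And>x. x \<in> A \<Longrightarrow> (\<Sum>\<^sub>\<infinity>y\<in>B x. norm (f (x, y))) = b x"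
        using inner nn by (simp add: infsumI)
      show "b summable_on A" using outer by (rule has_sum_imp_summable)
    qed
    then show "Infinite_Sum.abs_summable_on (\<lambda>x. \<Sum>\<^sub>\<infinity>y\<in>B x. norm (f (x, y))) A"
      by (simp add: infsum_nonneg)
  qed
  then have "f summable_on Sigma A B" by (rule abs_summable_summable)
  then have h: "(f has_sum infsum f (Sigma A B)) (Sigma A B)" by simp
  have "(b has_sum infsum f (Sigma A B)) A"
    by (rule has_sum_Sigma'[OF h inner]) 
  then have "infsum f (Sigma A B) = a" using outer has_sum_unique by blast
  then show ?thesis using h by simp
qed

lemma has_sum_product_nonneg:
  fixes g :: "'a \<Rightarrow> real" and h :: "'b \<Rightarrow> real"
  assumes "\<And>x. 0 \<le> g x" "\<And>y. 0 \<le> h y"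
    and "(g has_sum G) UNIV" "(h has_sum H) UNIV"
  shows "((\<lambda>(x,y). g x * h y) has_sum (G * H)) UNIV"
proof -
  have "((\<lambda>(x,y). g x * h y) has_sum (G * H)) (Sigma UNIV (\<lambda>_. UNIV))"
  proof (rule has_sum_Sigma_nonneg)
    show "\<And>z. 0 \<le> (case z of (x, y) \<Rightarrow> g x * h y)" using assms by (auto)
    show "((\<lambda>y. case (x, y) of (x, y) \<Rightarrow> g x * h y) has_sum g x * H) UNIV" for x
      using has_sum_cmult_right[OF assms(4)] by simp
    show "((\<lambda>x. g x * H) has_sum G * H) UNIV"
      using has_sum_cmult_left[OF assms(3)] by simp
  qed
  then show ?thesis by simp
qed

lemma has_sum_sum_fin:
  fixes f :: "'i \<Rightarrow> 'a \<Rightarrow> real"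
  assumes "finite I" "\<And>i. i \<in> I \<Longrightarrow> (f i has_sum s i) A"
  shows "((\<lambda>x. \<Sum>i\<in>I. f i x) has_sum (\<Sum>i\<in>I. s i)) A"
  using assms
proof (induction I rule: finite_induct)
  case empty
  then show ?case by simp
next
  case (insert i I)
  then show ?case by (simp add: has_sum_add)
qed



fun okp :: "nat \<Rightarrow> nat \<Rightarrow> bool list \<Rightarrow> bool" where
  "okp h t [] = (h = t)"
| "okp h t (True # u) = okp (Suc h) t u"
| "okp h t (False # u) = (0 < h \<and> okp (h - 1) t u)"

lemma okp_append: "okp h t (a @ b) \<longleftrightarrow> (\<exists>m. okp h m a \<and> okp m t b)"
proof (induction a arbitrary: h)
  case Nil then show ?case by simp
next
  case (Cons x a) then show ?case by (cases x) auto
qed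

lemma okp_snoc_True: "okp h t (u @ [True]) \<longleftrightarrow> (0 < t \<and> okp h (t - 1) u)"
  by (auto simp: okp_append)

lemma okp_snoc_False: "okp h t (u @ [False]) \<longleftrightarrow> okp h (Suc t) u"
  by (auto simp: okp_append)

lemma okp_rev: "okp h t u \<longleftrightarrow> okp t h (rev (map Not u))"
proof (induction u arbitrary: h)
  case Nil then show ?case by auto
next
  case (Cons x u) then show ?case
    by (cases x) (simp_all add: okp_snoc_True okp_snoc_False)
qed

lemma okp_shift: "okp h t u \<Longrightarrow> okp (h + d) (t + d) u"
proof (induction h t u rule: okp.induct)
  case (1 h t) then show ?case by simp
next
  case (2 h t u) then show ?case by simp
next
  case (3 h t u)
  then have "0 < h" "okp (h - 1) t u" by simp_all
  then have "okp (h - 1 + d) (t + d) u" using 3 by simp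
  moreover have "h - 1 + d = h + d - 1" using \<open>0 < h\<close> by simp
  ultimately show ?case using \<open>0 < h\<close> by simp
qed

lemma okp_repF: "okp h t (replicate j False) \<longleftrightarrow> h = t + j"
proof (induction j arbitrary: h)
  case 0 show ?case by simp
next
  case (Suc j)
  have "okp h t (replicate (Suc j) False) \<longleftrightarrow> 0 < h \<and> okp (h - 1) t (replicate j False)" by simp
  also have "\<dots> \<longleftrightarrow> 0 < h \<and> h - 1 = t + j" using Suc.IH by simp
  also have "\<dots> \<longleftrightarrow> h = t + Suc j" by arith
  finally show ?case .
qed

lemma count_S_simps[simp]: "count_S [] = 0" "count_S (True # u) = Suc (count_S u)"
  "count_S (False # u) = count_S u" "count_S (a @ b) = count_S a + count_S b"
  by (auto simp: count_S_def)

lemma count_H_simps[simp]: "count_H [] = 0" "count_H (True # u) = count_H u"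
  "count_H (False # u) = Suc (count_H u)" "count_H (a @ b) = count_H a + count_H b"
  by (auto simp: count_H_def)

lemma count_SH_len: "count_S u + count_H u = length u"
proof (induction u)
  case Nil then show ?case by simp
next
  case (Cons x u) then show ?case by (cases x) simp_all
qed

lemma count_S_repF[simp]: "count_S (replicate j False) = 0"
  by (induction j) auto
lemma count_H_repF[simp]: "count_H (replicate j False) = j"
  by (induction j) auto
lemma count_S_repT[simp]: "count_S (replicate j True) = j"
  by (induction j) auto
lemma count_H_repT[simp]: "count_H (replicate j True) = 0"
  by (induction j) auto

lemma all_le_Suc: "(\<forall>k\<le>Suc n. P k) \<longleftrightarrow> P 0 \<and> (\<forall>k\<le>n. P (Suc k))"
  by (metis Suc_le_mono le0 not0_implies_Suc)

lemma okp_count: "okp h t u \<longleftrightarrow> h + count_S u = t + count_H u \<and>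
   (\<forall>k\<le>length u. count_H (take k u) \<le> h + count_S (take k u))"
proof (induction h t u rule: okp.induct)
  case (1 h t) then show ?case by auto
next
  case (2 h t u) then show ?case by (simp add: all_le_Suc)
next
  case (3 h t u) then show ?case
    by (cases h) (auto simp add: all_le_Suc intro: exI[of _ 0])
qed

lemma dyck_okp: "dyck v \<longleftrightarrow> okp 0 0 v"
  unfolding dyck_def okp_count by auto



definition wt :: "real \<Rightarrow> real \<Rightarrow> bool list \<Rightarrow> real" where
  "wt p q u = q ^ count_S u * p ^ count_H u"

lemma wt_simps[simp]: "wt p q [] = 1" "wt p q (True # u) = q * wt p q u"
  "wt p q (False # u) = p * wt p q u" "wt p q (a @ b) = wt p q a * wt p q b"
  by (auto simp: wt_def power_add)

lemma wt_nonneg: "0 \<le> p \<Longrightarrow> 0 \<le> q \<Longrightarrow> 0 \<le> wt p q u"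
  by (simp add: wt_def)

lemma finite_len_le: "finite {u::bool list. P u \<and> length u \<le> n}"
proof -
  have "finite {u::bool list. set u \<subseteq> UNIV \<and> length u \<le> n}"
    by (rule finite_lists_length_le) simp
  then show ?thesis by (rule finite_subset[rotated]) auto
qed

lemma set_cons_split:
  "{u::bool list. P u} = {u. u = [] \<and> P u} \<union> (Cons True ` {u. P (True # u)} \<union> Cons False ` {u. P (False # u)})"
proof (rule set_eqI)
  fix u :: "bool list"
  show "u \<in> {u. P u} \<longleftrightarrow> u \<in> {u. u = [] \<and> P u} \<union> (Cons True ` {u. P (True # u)} \<union> Cons False ` {u. P (False # u)})"
    by (cases u) (auto, case_tac a, auto)
qed

lemma sum_len_Suc:
  fixes f :: "bool list \<Rightarrow> real"
  shows "sum f {u. P u \<and> length u \<le> Suc n} = (if P [] then f [] else 0)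
     + sum (\<lambda>u. f (True # u)) {u. P (True # u) \<and> length u \<le> n}
     + sum (\<lambda>u. f (False # u)) {u. P (False # u) \<and> length u \<le> n}"
proof -
  let ?Q = "\<lambda>u. P u \<and> length u \<le> Suc n"
  have e: "{u. ?Q u} = {u. u = [] \<and> ?Q u} \<union> (Cons True ` {u. ?Q (True # u)} \<union> Cons False ` {u. ?Q (False # u)})"
    by (rule set_cons_split)
  have f0: "{u. u = [] \<and> ?Q u} = (if P [] then {[]} else {})" by auto
  have fin: "finite (Cons b ` {u. ?Q (b # u)})" for b
    using finite_len_le[of "\<lambda>u. P (b # u)" "Suc n"] by (intro finite_imageI) (auto elim: finite_subset[rotated])
  have s2: "sum f (Cons True ` {u. ?Q (True # u)} \<union> Cons False ` {u. ?Q (False # u)}) = sum f (Cons True ` {u. ?Q (True # u)}) + sum f (Cons False ` {u. ?Q (False # u)})"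
    by (rule sum.union_disjoint) (use fin in auto)
  have "sum f {u. ?Q u} = sum f {u. u = [] \<and> ?Q u} + sum f (Cons True ` {u. ?Q (True # u)} \<union> Cons False ` {u. ?Q (False # u)})"
    unfolding e by (rule sum.union_disjoint) (use fin in \<open>auto simp: f0\<close>)
  also have "\<dots> = sum f {u. u = [] \<and> ?Q u} + (sum f (Cons True ` {u. ?Q (True # u)}) + sum f (Cons False ` {u. ?Q (False # u)}))"
    by (simp only: s2)
  also have "\<dots> = (if P [] then f [] else 0) + sum (\<lambda>u. f (True # u)) {u. P (True # u) \<and> length u \<le> n}
     + sum (\<lambda>u. f (False # u)) {u. P (False # u) \<and> length u \<le> n}"
    by (simp add: f0 sum.reindex)
  finally show ?thesis by simp
qed

lemma has_sum_cons_split: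
  fixes f :: "bool list \<Rightarrow> real"
  assumes "((\<lambda>u. f (True # u)) has_sum a) {u. P (True # u)}"
    and "((\<lambda>u. f (False # u)) has_sum b) {u. P (False # u)}"
  shows "(f has_sum ((if P [] then f [] else 0) + a + b)) {u. P u}"
proof -
  have f0: "{u. u = [] \<and> P u} = (if P [] then {[]} else {})" by auto
  have h0: "(f has_sum (if P [] then f [] else 0)) {u. u = [] \<and> P u}"
    by (rule has_sum_finiteI) (auto simp: f0)
  have h1: "(f has_sum a) (Cons True ` {u. P (True # u)})"
    using assms(1) by (subst has_sum_reindex) (auto simp: o_def)
  have h2: "(f has_sum b) (Cons False ` {u. P (False # u)})"
    using assms(2) by (subst has_sum_reindex) (auto simp: o_def)
  have "(f has_sum ((if P [] then f [] else 0) + (a + b))) ({u. u = [] \<and> P u} \<union> (Cons True ` {u. P (True # u)} \<union> Cons False ` {u. P (False # u)}))"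
    by (intro has_sum_Un_disjoint h0 h1 h2) auto
  then show ?thesis by (subst set_cons_split) (simp add: add.assoc)
qed

locale pq =
  fixes p q :: real
  assumes pq1: "p + q = 1" and q0: "0 < q" and qp: "q < p"
begin

lemma p0: "0 < p" using q0 qp by simp

lemma wnn: "0 \<le> wt p q u" using p0 q0 by (simp add: wt_nonneg)

lemma K_bound: "sum (wt p q) {u. okp h 0 u \<and> length u \<le> n} \<le> 1 / p"
proof (induction n arbitrary: h)
  case 0
  have "{u. okp h 0 u \<and> length u \<le> 0} = (if h = 0 then {[]} else {})" by auto
  then show ?case using p0 pq1 q0 by (simp add: field_simps)
next
  case (Suc n)
  have A: "sum (wt p q) {u. okp h 0 u \<and> length u \<le> Suc n} = (if h = 0 then 1 else 0)
     + q * sum (wt p q) {u. okp (Suc h) 0 u \<and> length u \<le> n}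
     + p * sum (wt p q) {u. (0 < h \<and> okp (h - 1) 0 u) \<and> length u \<le> n}"
    by (subst sum_len_Suc) (simp add: sum_distrib_left)
  show ?case
  proof (cases h)
    case 0
    then have "sum (wt p q) {u. okp h 0 u \<and> length u \<le> Suc n} = 1 + q * sum (wt p q) {u. okp (Suc h) 0 u \<and> length u \<le> n}"
      using A by simp
    also have "\<dots> \<le> 1 + q * (1/p)" using mult_left_mono[OF Suc.IH[of "Suc h"], of q] q0 by simp
    also have "\<dots> = 1 / p" using p0 pq1 by (simp add: field_simps)
    finally show ?thesis .
  next
    case (Suc h')
    then have "sum (wt p q) {u. okp h 0 u \<and> length u \<le> Suc n} = q * sum (wt p q) {u. okp (Suc h) 0 u \<and> length u \<le> n}
       + p * sum (wt p q) {u. okp h' 0 u \<and> length u \<le> n}"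
      using A by simp
    also have "\<dots> \<le> q * (1/p) + p * (1/p)"
      using Suc.IH[of "Suc h"] Suc.IH[of h'] q0 p0 by (intro add_mono mult_left_mono) auto
    also have "\<dots> = 1 / p" using p0 pq1 by (simp add: field_simps)
    finally show ?thesis .
  qed
qed

lemma K_fin: "finite F \<Longrightarrow> F \<subseteq> {u. okp h 0 u} \<Longrightarrow> sum (wt p q) F \<le> 1 / p"
proof -
  assume F: "finite F" "F \<subseteq> {u. okp h 0 u}"
  define n where "n = Max (length ` F)"
  have "F \<subseteq> {u. okp h 0 u \<and> length u \<le> n}"
    using F by (auto simp: n_def)
  then have "sum (wt p q) F \<le> sum (wt p q) {u. okp h 0 u \<and> length u \<le> n}"
    by (intro sum_mono2 finite_len_le wnn)
  also have "\<dots> \<le> 1 / p" by (rule K_bound)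
  finally show ?thesis .
qed

lemma K_summable: "wt p q summable_on {u. okp h 0 u}"
  by (rule nonneg_bdd_above_summable_on) (auto simp: wnn intro!: bdd_aboveI2 K_fin)

definition K :: "nat \<Rightarrow> real" where "K h = infsum (wt p q) {u. okp h 0 u}"

lemma K_has_sum: "(wt p q has_sum K h) {u. okp h 0 u}"
  unfolding K_def using K_summable by simp

lemma K_le: "K h \<le> 1 / p"
  unfolding K_def by (rule infsum_le_finite_sums[OF K_summable K_fin])

lemma K_ge: "0 \<le> K h"
  unfolding K_def by (rule infsum_nonneg) (simp add: wnn)

lemma K_rec: "K h = (if h = 0 then 1 else 0) + q * K (Suc h) + (if 0 < h then p * K (h - 1) else 0)"
proof -
  have a: "((\<lambda>u. wt p q (True # u)) has_sum q * K (Suc h)) {u. okp h 0 (True # u)}"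
    using has_sum_cmult_right[OF K_has_sum[of "Suc h"], of q] by simp
  have b: "((\<lambda>u. wt p q (False # u)) has_sum (if 0 < h then p * K (h - 1) else 0)) {u. okp h 0 (False # u)}"
  proof (cases "0 < h")
    case True
    then show ?thesis
      using has_sum_cmult_right[OF K_has_sum[of "h - 1"], of p] by simp
  next
    case False
    then show ?thesis by simp
  qed
  have "(wt p q has_sum ((if okp h 0 [] then wt p q [] else 0) + q * K (Suc h) + (if 0 < h then p * K (h - 1) else 0))) {u. okp h 0 u}"
    by (rule has_sum_cons_split[OF a b])
  then show ?thesis using K_has_sum[of h] has_sum_unique by fastforce
qed

lemma K_val: "K h = 1 / p"
proof -
  define e where "e h = K h - 1 / p" for h
  have c: "1 / p = q * (1/p) + p * (1/p)" using p0 pq1 by (simp add: field_simps)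
  have c1: "p * (1/p) = 1" using p0 by simp
  have kr0: "K 0 = 1 + q * K 1" using K_rec[of 0] by simp
  have kr: "K (Suc h) = q * K (Suc (Suc h)) + p * K h" for h using K_rec[of "Suc h"] by simp
  have e0: "e 0 = q * e 1"
    unfolding e_def right_diff_distrib using kr0 c c1 by linarith
  have eS: "e (Suc h) = q * e (Suc (Suc h)) + p * e h" for h
    unfolding e_def right_diff_distrib using kr[of h] c by linarith
  have ele: "e h \<le> 0" for h using K_le[of h] by (simp add: e_def)
  have ege: "- 1 / p \<le> e h" for h using K_ge[of h] by (simp add: e_def)
  define d where "d h = e (Suc h) - e h" for h
  have dS: "q * d (Suc h) = p * d h" for h
  proof -
    have "(q + p) * e (Suc h) = e (Suc h)" using pq1 by (simp add: add.commute)
    then have "q * e (Suc h) + p * e (Suc h) = e (Suc h)" by (simp only: distrib_right)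
    then show ?thesis unfolding d_def right_diff_distrib using eS[of h] by linarith
  qed
  have e1: "e 1 = 0"
  proof (rule ccontr)
    assume ne: "e 1 \<noteq> 0"
    have e1n: "e 1 < 0" using ne ele[of 1] by linarith
    have pq': "p = 1 - q" using pq1 by simp
    have "d 0 = p * e 1" unfolding d_def e0 pq' by (simp add: algebra_simps)
    then have d0: "d 0 < 0" using mult_pos_neg[OF p0 e1n] by simp
    have e0n: "e 0 < 0" unfolding e0 using mult_pos_neg[OF q0 e1n] .
    have dle: "d h \<le> d 0" for h
    proof (induction h)
      case 0 then show ?case by simp
    next
      case (Suc h)
      have "d (Suc h) = (p / q) * d h" using dS[of h] q0 by (simp add: field_simps)
      also have "\<dots> \<le> 1 * d h"
      proof (rule mult_right_mono_neg)
        show "1 \<le> p / q" using q0 qp by simp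
        show "d h \<le> 0" using Suc d0 by simp
      qed
      finally show ?case using Suc by simp
    qed
    have ebound: "e h \<le> e 0 + real h * d 0" for h
    proof (induction h)
      case 0 then show ?case by simp
    next
      case (Suc h)
      have "e (Suc h) = e h + d h" by (simp add: d_def)
      also have "\<dots> \<le> e 0 + real h * d 0 + d 0" using Suc dle[of h] by simp
      finally show ?case by (simp add: algebra_simps)
    qed
    obtain n :: nat where n: "1 / p < real n * (- d 0)"
      using reals_Archimedean3[of "- d 0"] d0 by auto
    have "e n \<le> real n * d 0" using ebound[of n] e0n by simp
    also have "\<dots> < - 1 / p" using n by simp
    finally show False using ege[of n] by simp
  qed
  have e00: "e 0 = 0" using e0 e1 by simp
  have "e h = 0 \<and> e (Suc h) = 0" for h
  proof (induction h)
    case 0 then show ?case using e00 e1 by simp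
  next
    case (Suc h)
    then have a: "e h = 0" "e (Suc h) = 0" by auto
    have "q * e (Suc (Suc h)) = 0" using eS[of h] a by simp
    then have "e (Suc (Suc h)) = 0" using q0 by simp
    then show ?case using a by simp
  qed
  then show ?thesis unfolding e_def by simp
qed

end



definition ends :: "nat \<Rightarrow> bool list \<Rightarrow> bool" where
  "ends j v \<longleftrightarrow> (\<exists>a. v = a @ replicate j False)"

lemma okp_repT: "okp h t (replicate j True) \<longleftrightarrow> t = h + j"
proof (induction j arbitrary: h)
  case 0 show ?case by auto
next
  case (Suc j)
  have "okp h t (replicate (Suc j) True) \<longleftrightarrow> okp (Suc h) t (replicate j True)" by simp
  also have "\<dots> \<longleftrightarrow> t = Suc h + j" using Suc.IH by simp
  finally show ?case by simp
qed

lemma count_S_revnot[simp]: "count_S (rev (map Not u)) = count_H u"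
proof (induction u)
  case Nil then show ?case by simp
next
  case (Cons x u) then show ?case by (cases x) auto
qed
lemma count_H_revnot[simp]: "count_H (rev (map Not u)) = count_S u"
proof (induction u)
  case Nil then show ?case by simp
next
  case (Cons x u) then show ?case by (cases x) auto
qed

lemma count_H_0: "count_H a = 0 \<Longrightarrow> a = replicate (length a) True"
proof (induction a)
  case Nil then show ?case by simp
next
  case (Cons x a) then show ?case by (cases x) auto
qed

lemma revnot_revnot[simp]: "rev (map Not (rev (map Not u))) = u"
  by (simp add: rev_map o_def)

context pq
begin

lemma S1: "(wt p q has_sum (q ^ j / p)) {v. okp 0 0 v \<and> ends j v}"
proof -
  define \<phi> where "\<phi> a = rev (map Not a) @ replicate j False" for a
  have inj: "inj_on \<phi> {a. okp j 0 a}"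
    by (rule inj_onI) (simp add: \<phi>_def, metis revnot_revnot)
  have seteq: "{v. okp 0 0 v \<and> ends j v} = \<phi> ` {a. okp j 0 a}"
  proof (rule set_eqI, rule iffI)
    fix v assume "v \<in> {v. okp 0 0 v \<and> ends j v}"
    then obtain a where v: "v = a @ replicate j False" and ok: "okp 0 0 v"
      by (auto simp: ends_def)
    then have "okp 0 j a" by (auto simp: okp_append okp_repF)
    then have "okp j 0 (rev (map Not a))" by (simp add: okp_rev[of 0 j a])
    moreover have "v = \<phi> (rev (map Not a))" by (simp add: \<phi>_def v)
    ultimately show "v \<in> \<phi> ` {a. okp j 0 a}" by blast
  next
    fix v assume "v \<in> \<phi> ` {a. okp j 0 a}"
    then obtain a where v: "v = \<phi> a" and ok: "okp j 0 a" by auto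
    have "okp 0 j (rev (map Not a))" using ok okp_rev[of j 0 a] by simp
    then show "v \<in> {v. okp 0 0 v \<and> ends j v}"
      by (auto simp: v \<phi>_def ends_def okp_append okp_repF)
  qed
  have wphi: "wt p q (\<phi> a) = q ^ j * wt p q a" if "okp j 0 a" for a
  proof -
    have c: "count_H a = count_S a + j" using that by (simp add: okp_count)
    show ?thesis by (simp add: \<phi>_def wt_def c power_add)
  qed
  have "((\<lambda>a. q ^ j * wt p q a) has_sum (q ^ j * K j)) {a. okp j 0 a}"
    by (rule has_sum_cmult_right[OF K_has_sum])
  then have "((wt p q \<circ> \<phi>) has_sum (q ^ j / p)) {a. okp j 0 a}"
    by (subst has_sum_cong[where g = "\<lambda>a. q ^ j * wt p q a"]) (auto simp: wphi K_val)
  then show ?thesis unfolding seteq by (subst has_sum_reindex[OF inj])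
qed

lemma S2: "(wt p q has_sum ((p * q) ^ j)) {v. okp 0 0 v \<and> ends j v \<and> count_S v = j}"
proof -
  have "{v. okp 0 0 v \<and> ends j v \<and> count_S v = j} = {replicate j True @ replicate j False}"
  proof (rule set_eqI, rule iffI)
    fix v assume "v \<in> {v. okp 0 0 v \<and> ends j v \<and> count_S v = j}"
    then have ok: "okp 0 0 v" and cs: "count_S v = j" and "ends j v" by auto
    then obtain a where v: "v = a @ replicate j False" by (auto simp: ends_def)
    then have "okp 0 j a" using ok by (auto simp: okp_append okp_repF)
    then have "count_S a = j + count_H a" by (simp add: okp_count)
    moreover have "count_S a = j" using cs v by simp
    ultimately have "count_H a = 0" by simp
    then have "a = replicate (length a) True" by (rule count_H_0)
    moreover have "length a = j" using \<open>count_H a = 0\<close> \<open>count_S a = j\<close> count_SH_len[of a] by simp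
    ultimately show "v \<in> {replicate j True @ replicate j False}" using v by simp
  next
    fix v assume "v \<in> {replicate j True @ replicate j False}"
    then show "v \<in> {v. okp 0 0 v \<and> ends j v \<and> count_S v = j}"
      by (auto simp: ends_def okp_append okp_repF okp_repT)
  qed
  moreover have "wt p q (replicate j True @ replicate j False) = (p * q) ^ j"
    by (simp add: wt_def power_mult_distrib)
  ultimately show ?thesis by (simp add: has_sum_finiteI)
qed

end



definition coinp :: "real \<Rightarrow> bool list \<Rightarrow> real" where
  "coinp \<gamma> c = (\<Prod>b\<leftarrow>c. if b then \<gamma> else 1 - \<gamma>)"

lemma coinp_simps[simp]: "coinp \<gamma> [] = 1" "coinp \<gamma> (True # c) = \<gamma> * coinp \<gamma> c"
  "coinp \<gamma> (False # c) = (1 - \<gamma>) * coinp \<gamma> c"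
  by (auto simp: coinp_def)

lemma coinp_nonneg: "0 \<le> \<gamma> \<Longrightarrow> \<gamma> \<le> 1 \<Longrightarrow> 0 \<le> coinp \<gamma> c"
proof (induction c)
  case Nil then show ?case by simp
next
  case (Cons x c) then show ?case by (cases x) auto
qed

lemma finite_len_eq: "finite {c::bool list. length c = n}"
proof -
  have "finite {u::bool list. set u \<subseteq> UNIV \<and> length u = n}"
    by (rule finite_lists_length_eq) simp
  then show ?thesis by simp
qed

lemma sum_len_eq_Suc:
  fixes f :: "bool list \<Rightarrow> real"
  shows "sum f {c. length c = Suc n} = sum (\<lambda>c. f (True # c)) {c. length c = n} + sum (\<lambda>c. f (False # c)) {c. length c = n}"
proof -
  have e: "{c::bool list. length c = Suc n} = Cons True ` {c. length c = n} \<union> Cons False ` {c. length c = n}"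
  proof (rule set_eqI)
    fix c :: "bool list"
    show "c \<in> {c. length c = Suc n} \<longleftrightarrow> c \<in> Cons True ` {c. length c = n} \<union> Cons False ` {c. length c = n}"
    proof (cases c)
      case Nil then show ?thesis by auto
    next
      case (Cons b l) then show ?thesis by (cases b) auto
    qed
  qed
  show ?thesis unfolding e
    by (subst sum.union_disjoint) (auto simp: finite_len_eq sum.reindex)
qed

lemma C1: "sum (coinp \<gamma>) {c. length c = n} = 1"
proof (induction n)
  case 0
  have "{c::bool list. length c = 0} = {[]}" by auto
  then show ?case by simp
next
  case (Suc n)
  then show ?case by (simp add: sum_len_eq_Suc sum_distrib_left[symmetric])
qed

lemma C2: "j < n \<Longrightarrow> sum (\<lambda>c. coinp \<gamma> c * (if c ! j then 1 else 0)) {c. length c = n} = \<gamma>"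
proof (induction n arbitrary: j)
  case 0 then show ?case by simp
next
  case (Suc n)
  show ?case
  proof (cases j)
    case 0
    then show ?thesis by (simp add: sum_len_eq_Suc sum_distrib_left[symmetric] C1)
  next
    case (Suc j')
    then have "j' < n" using Suc.prems by simp
    let ?S = "sum (\<lambda>c. coinp \<gamma> c * (if c ! j' then 1 else 0)) {c. length c = n}"
    have "sum (\<lambda>c. coinp \<gamma> c * (if c ! j then 1 else 0)) {c. length c = Suc n} = \<gamma> * ?S + (1 - \<gamma>) * ?S"
      by (simp add: sum_len_eq_Suc Suc sum_distrib_left mult.assoc)
    also have "\<dots> = \<gamma>" using Suc.IH[OF \<open>j' < n\<close>] by (simp add: algebra_simps)
    finally show ?thesis .
  qed
qed

lemma C3: "j < n \<Longrightarrow> sum (\<lambda>c. coinp \<gamma> c * (if c ! j then 0 else 1)) {c. length c = n} = 1 - \<gamma>"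
proof -
  assume j: "j < n"
  have "sum (\<lambda>c. coinp \<gamma> c * (if c ! j then 0 else 1)) {c. length c = n} = sum (\<lambda>c. coinp \<gamma> c - coinp \<gamma> c * (if c ! j then 1 else 0)) {c. length c = n}"
    by (rule sum.cong) auto
  also have "\<dots> = sum (coinp \<gamma>) {c. length c = n} - sum (\<lambda>c. coinp \<gamma> c * (if c ! j then 1 else 0)) {c. length c = n}"
    by (rule sum_subtractf)
  finally show ?thesis using C1[of \<gamma> n] C2[OF j, of \<gamma>] by simp
qed

lemma outcome_prob_eq: "outcome_prob p q \<gamma> (w, c) = (if length c = count_H w then cycle_prob p q w * coinp \<gamma> c else 0)"
  by (simp add: outcome_prob_def coinp_def)

lemma cycle_prob_nonneg: "0 \<le> p \<Longrightarrow> 0 \<le> q \<Longrightarrow> 0 \<le> cycle_prob p q w"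
  by (simp add: cycle_prob_def)

lemma outcome_prob_nonneg: "0 \<le> p \<Longrightarrow> 0 \<le> q \<Longrightarrow> 0 \<le> \<gamma> \<Longrightarrow> \<gamma> \<le> 1 \<Longrightarrow> 0 \<le> outcome_prob p q \<gamma> \<omega>"
  by (cases \<omega>) (simp add: outcome_prob_eq cycle_prob_nonneg coinp_nonneg)

lemma has_sum_wc:
  fixes \<phi> :: "bool list \<times> bool list \<Rightarrow> real"
  assumes nn: "\<And>z. 0 \<le> \<phi> z" and g: "0 \<le> \<gamma>" "\<gamma> \<le> 1" and pq: "0 \<le> p" "0 \<le> q"
    and G: "((\<lambda>w. cycle_prob p q w * (\<Sum>c\<in>{c. length c = count_H w}. coinp \<gamma> c * \<phi> (w, c))) has_sum T) UNIV"
  shows "((\<lambda>\<omega>. outcome_prob p q \<gamma> \<omega> * \<phi> \<omega>) has_sum T) UNIV"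
proof -
  let ?F = "\<lambda>\<omega>. outcome_prob p q \<gamma> \<omega> * \<phi> \<omega>"
  have "(?F has_sum T) (Sigma UNIV (\<lambda>w. {c. length c = count_H w}))"
  proof (rule has_sum_Sigma_nonneg[OF _ _ G])
    show "0 \<le> ?F z" for z using nn outcome_prob_nonneg[OF pq g, of z] by simp
    show "((\<lambda>c. ?F (w, c)) has_sum cycle_prob p q w * (\<Sum>c\<in>{c. length c = count_H w}. coinp \<gamma> c * \<phi> (w, c))) {c. length c = count_H w}" for w
      by (rule has_sum_finiteI) (auto simp: finite_len_eq outcome_prob_eq sum_distrib_left mult.assoc intro!: sum.cong)
  qed
  then show ?thesis
    by (subst has_sum_cong_neutral[where T = "Sigma UNIV (\<lambda>w. {c. length c = count_H w})" and g = ?F]) (auto simp: outcome_prob_eq split: if_splits)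
qed

definition fw :: "bool list \<Rightarrow> bool list" where "fw v = True # True # v @ [False]"

lemma valid_cycle_iff: "valid_cycle w \<longleftrightarrow> w \<in> {[False], [True, False, True], [True, False, False]} \<union> fw ` {v. okp 0 0 v}"
  by (auto simp: valid_cycle_def fw_def dyck_okp)

context pq
begin

lemma has_sum_w:
  fixes G :: "bool list \<Rightarrow> real"
  assumes X: "((\<lambda>v. q^2 * p * wt p q v * G (fw v)) has_sum X) {v. okp 0 0 v}"
  shows "((\<lambda>w. cycle_prob p q w * G w) has_sum (p * G [False] + p * q^2 * G [True, False, True] + p^2 * q * G [True, False, False] + X)) UNIV"
proof -
  let ?F = "\<lambda>w. cycle_prob p q w * G w"
  let ?V0 = "{[False], [True, False, True], [True, False, False]}"
  have h0: "(?F has_sum (p * G [False] + p * q^2 * G [True, False, True] + p^2 * q * G [True, False, False])) ?V0"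
    by (rule has_sum_finiteI) (auto simp: cycle_prob_def valid_cycle_def count_S_def count_H_def power2_eq_square)
  have inj: "inj_on fw {v. okp 0 0 v}" by (rule inj_onI) (simp add: fw_def)
  have cp: "cycle_prob p q (fw v) = q^2 * p * wt p q v" if "okp 0 0 v" for v
    using that by (simp add: cycle_prob_def valid_cycle_iff wt_def fw_def power_add power2_eq_square)
  have h1: "(?F has_sum X) (fw ` {v. okp 0 0 v})"
    by (subst has_sum_reindex[OF inj]) (rule has_sum_cong[THEN iffD2, OF _ X], simp add: cp)
  have "(?F has_sum (p * G [False] + p * q^2 * G [True, False, True] + p^2 * q * G [True, False, False] + X)) (?V0 \<union> fw ` {v. okp 0 0 v})"
    by (rule has_sum_Un_disjoint[OF h0 h1]) (auto simp: fw_def)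
  then show ?thesis
    by (subst has_sum_cong_neutral[where T = "?V0 \<union> fw ` {v. okp 0 0 v}" and g = ?F])
       (auto simp: cycle_prob_def valid_cycle_iff simp del: insert_iff Un_iff)
qed

end



definition fblk :: "bool list \<Rightarrow> bool list \<Rightarrow> nat \<Rightarrow> blk" where
  "fblk w c k = (if w ! k then
       \<lparr>honest = False, height = count_S (take (Suc k) w), mined = k, published = k,
        official = True, parent_official = True\<rparr>
     else
       \<lparr>honest = True, height = count_H (take (Suc k) w), mined = k, published = k,
        official = False,
        parent_official = (count_H (take (Suc k) w) = 1 \<or> c ! (count_H (take (Suc k) w) - 1))\<rparr>)"

lemma fork_blocks_eq: "fork_blocks w c = map (fblk w c) [0..<length w]"
  by (simp add: fork_blocks_def fblk_def)

lemma fblk_simps[simp]: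
  "honest (fblk w c k) = (\<not> w ! k)" "official (fblk w c k) = w ! k"
  "height (fblk w c k) = (if w ! k then count_S (take (Suc k) w) else count_H (take (Suc k) w))"
  "mined (fblk w c k) = k" "published (fblk w c k) = k"
  "parent_official (fblk w c k) = (w ! k \<or> count_H (take (Suc k) w) = 1 \<or> c ! (count_H (take (Suc k) w) - 1))"
  by (auto simp: fblk_def)

lemma shift_simps[simp]:
  "honest (shift_blk dh dt b) = honest b" "official (shift_blk dh dt b) = official b"
  "height (shift_blk dh dt b) = height b + dh" "mined (shift_blk dh dt b) = mined b + dt"
  "published (shift_blk dh dt b) = published b + dt"
  "parent_official (shift_blk dh dt b) = parent_official b"
  by (auto simp: shift_blk_def)

lemma count_S_take_Suc: "k < length w \<Longrightarrow> count_S (take (Suc k) w) = count_S (take k w) + (if w ! k then 1 else 0)"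
  by (simp add: take_Suc_conv_app_nth count_S_def)
lemma count_H_take_Suc: "k < length w \<Longrightarrow> count_H (take (Suc k) w) = count_H (take k w) + (if w ! k then 0 else 1)"
  by (simp add: take_Suc_conv_app_nth count_H_def)

lemma count_S_take_le0: "count_S (take m u) \<le> count_S u"
  using count_S_simps(4)[of "take m u" "drop m u"] by simp

lemma count_S_take_mono: "m \<le> m' \<Longrightarrow> count_S (take m w) \<le> count_S (take m' w)"
  using count_S_take_le0[of m "take m' w"] by (simp add: min_def)

lemma count_H_take_le0: "count_H (take m u) \<le> count_H u"
  using count_H_simps(4)[of "take m u" "drop m u"] by simp

lemma count_H_take_mono: "m \<le> m' \<Longrightarrow> count_H (take m w) \<le> count_H (take m' w)"
  using count_H_take_le0[of m "take m' w"] by (simp add: min_def)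

lemma count_S_take_le: "count_S (take m w) \<le> count_S w"
  by (metis count_S_take_mono nat_le_linear take_all)
lemma count_H_take_le: "count_H (take m w) \<le> count_H w"
  by (metis count_H_take_mono nat_le_linear take_all)

definition Nn :: "bool list \<Rightarrow> bool list \<Rightarrow> bool" where
  "Nn w c \<longleftrightarrow> w = [False] \<or> (w = [True, False, False] \<and> \<not> c ! 1)"

definition isfork :: "bool list \<Rightarrow> bool" where
  "isfork w \<longleftrightarrow> w = [True, False, True] \<or> (\<exists>v. okp 0 0 v \<and> w = fw v)"

lemma fblk_height_pos: "k < length w \<Longrightarrow> 1 \<le> height (fblk w c k)"
  by (auto simp: count_S_take_Suc count_H_take_Suc)

lemma valid_cases: "valid_cycle w \<longleftrightarrow> w = [False] \<or> w = [True, False, False] \<or> isfork w"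
  by (auto simp: valid_cycle_iff isfork_def)

lemma isfork_ne: "isfork w \<Longrightarrow> w \<noteq> [False] \<and> w \<noteq> [True, False, False] \<and> w ! 0 \<and> 0 < length w"
  by (auto simp: isfork_def fw_def)

lemma cycle_blocks_fork: "isfork w \<Longrightarrow> cycle_blocks w c = fork_blocks w c"
  using isfork_ne[of w] by (simp add: cycle_blocks_def)

lemma next_facts:
  assumes "valid_cycle w"
  shows "(\<forall>b\<in>set (cycle_blocks w c). 1 \<le> height b)"
    and "(\<exists>b\<in>set (cycle_blocks w c). official b \<and> height b = 1)"
    and "(\<exists>b\<in>set (cycle_blocks w c). honest b \<and> official b \<and> height b = 1) \<longleftrightarrow> Nn w c"
proof -
  consider "w = [False]" | "w = [True, False, False]" | "isfork w" using assms valid_cases by blast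
  then have "(\<forall>b\<in>set (cycle_blocks w c). 1 \<le> height b) \<and> (\<exists>b\<in>set (cycle_blocks w c). official b \<and> height b = 1)
    \<and> ((\<exists>b\<in>set (cycle_blocks w c). honest b \<and> official b \<and> height b = 1) \<longleftrightarrow> Nn w c)"
  proof cases
    case 1 then show ?thesis by (simp add: cycle_blocks_def Nn_def)
  next
    case 2 then show ?thesis by (simp add: cycle_blocks_def Nn_def)
  next
    case 3
    note ne = isfork_ne[OF 3]
    have cb: "cycle_blocks w c = map (fblk w c) [0..<length w]"
      by (simp add: cycle_blocks_fork[OF 3] fork_blocks_eq)
    have h1: "\<forall>b\<in>set (cycle_blocks w c). 1 \<le> height b"
      using fblk_height_pos[of _ w c] by (auto simp: cb simp del: fblk_simps)
    have "fblk w c 0 \<in> set (cycle_blocks w c)" using ne by (simp add: cb)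
    moreover have "official (fblk w c 0) \<and> height (fblk w c 0) = 1"
      using ne by (cases w) auto
    ultimately have h2: "\<exists>b\<in>set (cycle_blocks w c). official b \<and> height b = 1" by blast
    have h3: "\<not> (\<exists>b\<in>set (cycle_blocks w c). honest b \<and> official b \<and> height b = 1)"
      by (auto simp: cb)
    have "\<not> Nn w c" using ne by (simp add: Nn_def)
    then show ?thesis using h1 h2 h3 by blast
  qed
  then show "(\<forall>b\<in>set (cycle_blocks w c). 1 \<le> height b)"
    and "(\<exists>b\<in>set (cycle_blocks w c). official b \<and> height b = 1)"
    and "(\<exists>b\<in>set (cycle_blocks w c). honest b \<and> official b \<and> height b = 1) \<longleftrightarrow> Nn w c"
    by blast+
qed



definition condk :: "nat \<Rightarrow> bool list \<Rightarrow> bool list \<Rightarrow> nat \<Rightarrow> bool" where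
  "condk n1 w c k \<longleftrightarrow> \<not> w ! k \<and> (\<forall>k'. k < k' \<and> k' < length w \<longrightarrow> \<not> w ! k') \<and>
     count_S w + 1 \<le> count_H (take (Suc k) w) + n1 \<and>
     (count_H (take (Suc k) w) = 1 \<or> c ! (count_H (take (Suc k) w) - 1))"

lemma isfork_okp: "isfork w \<Longrightarrow> okp 0 1 w"
  unfolding isfork_def fw_def
  using okp_shift[of 0 0 _ 2] by (auto simp: okp_snoc_False)

lemma fork_facts:
  assumes "isfork w"
  shows "count_S w = Suc (count_H w)" "\<And>m. m \<le> length w \<Longrightarrow> count_H (take m w) \<le> count_S (take m w)"
  using isfork_okp[OF assms] by (auto simp: okp_count)

lemma U_h_fork:
  assumes F: "isfork w" and V': "valid_cycle w'"
  shows "U_h n1 (w, c) (w', c') = (if Nn w' c' then card {k. k < length w \<and> condk n1 w c k} else 0)"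
proof -
  define g where "g = count_S w"
  define n where "n = length w"
  note ne = isfork_ne[OF F]
  have gr: "growth w = g" using ne by (simp add: growth_def g_def)
  have cbw: "cycle_blocks w c = map (fblk w c) [0..<length w]"
    by (simp add: cycle_blocks_fork[OF F] fork_blocks_eq)
  define B where "B = map (fblk w c) [0..<length w] @ map (shift_blk g (length w)) (cycle_blocks w' c')"
  define Q where "Q = (\<lambda>u. is_uncle u \<and> (\<exists>b\<in>set B. can_refer n1 b u \<and> honest b \<and>
           (\<forall>b'\<in>set B. can_refer n1 b' u \<longrightarrow> height b \<le> height b')))"
  have "U_h n1 (w, c) (w', c') = length (filter Q (map (fblk w c) [0..<n]))"
    unfolding n_def by (simp add: U_h_def cbw gr B_def Q_def Let_def)
  also have "\<dots> = card {k. k < n \<and> Q (fblk w c k)}"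
    by (simp add: length_filter_map distinct_length_filter Int_def conj_commute)
  finally have U: "U_h n1 (w, c) (w', c') = card {k. k < n \<and> Q (fblk w c k)}" .
  have cSH: "count_S w = Suc (count_H w)" using fork_facts[OF F] by simp
  have pre: "\<And>m. m \<le> n \<Longrightarrow> count_H (take m w) \<le> count_S (take m w)"
    using fork_facts[OF F] by (simp add: n_def)
  have setB: "set B = fblk w c ` {0..<n} \<union> shift_blk g n ` set (cycle_blocks w' c')"
    by (simp add: B_def n_def)
  note NB = next_facts[OF V', of c']
  have key: "Q (fblk w c k) \<longleftrightarrow> condk n1 w c k \<and> Nn w' c'" if k: "k < n" for k
  proof -
    let ?u = "fblk w c k"
    define h where "h = count_H (take (Suc k) w)"
    have hle: "h < g" using count_H_take_le[of "Suc k" w] cSH by (simp add: h_def g_def)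
    have Fe: "h < count_S (take (Suc k') w) \<and> count_S (take (Suc k') w) \<le> g"
      if "k < k'" "k' < n" "w ! k'" for k'
    proof -
      have "h \<le> count_S (take (Suc k) w)" using pre[of "Suc k"] k by (simp add: h_def)
      also have "\<dots> \<le> count_S (take k' w)" using that by (intro count_S_take_mono) simp
      also have "\<dots> < count_S (take (Suc k') w)" using that by (simp add: count_S_take_Suc n_def)
      finally show ?thesis using count_S_take_le[of "Suc k'" w] by (simp add: g_def)
    qed
    show ?thesis
    proof
      assume "Q ?u"
      then have unc: "is_uncle ?u" and "\<exists>b\<in>set B. can_refer n1 b ?u \<and> honest b \<and>
           (\<forall>b'\<in>set B. can_refer n1 b' ?u \<longrightarrow> height b \<le> height b')" by (auto simp: Q_def)
      then obtain b where bB: "b \<in> set B" and cr: "can_refer n1 b ?u" and hb: "honest b"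
        and mn: "\<And>b'. b' \<in> set B \<Longrightarrow> can_refer n1 b' ?u \<Longrightarrow> height b \<le> height b'" by blast
      have wk: "\<not> w ! k" and par: "h = 1 \<or> c ! (h - 1)" using unc by (auto simp: is_uncle_def h_def)
      have hu: "height ?u = h" using wk by (simp add: h_def)
      have ob: "official b" using cr by (simp add: can_refer_def)
      have "b \<notin> fblk w c ` {0..<n}" using ob hb by auto
      then obtain b0 where b0: "b0 \<in> set (cycle_blocks w' c')" and bb0: "b = shift_blk g n b0"
        using bB setB by auto
      have hb0: "1 \<le> height b0" using NB(1) b0 by blast
      have dist: "height b0 + g \<le> h + n1" using cr hu by (simp add: can_refer_def bb0)
      obtain a0 where a0: "a0 \<in> set (cycle_blocks w' c')" "official a0" "height a0 = 1" using NB(2) by blast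
      have "can_refer n1 (shift_blk g n a0) ?u"
        using a0 k hle dist hb0 hu by (simp add: can_refer_def)
      moreover have "shift_blk g n a0 \<in> set B" using a0 setB by blast
      ultimately have "height b \<le> height (shift_blk g n a0)" using mn by blast
      then have "height b0 = 1" using hb0 a0 by (simp add: bb0)
      then have nn: "Nn w' c'" using NB(3) b0 hb ob bb0 by auto
      have trail: "\<not> w ! k'" if "k < k'" "k' < length w" for k'
      proof
        assume wk': "w ! k'"
        have "can_refer n1 (fblk w c k') ?u"
          using Fe[OF that(1) _ wk'] that wk' hu dist hb0 by (simp add: can_refer_def n_def)
        moreover have "fblk w c k' \<in> set B" using setB that by (auto simp: n_def)
        ultimately have "height b \<le> height (fblk w c k')" using mn by blast
        then show False using Fe[OF that(1) _ wk'] that wk' hb0 by (simp add: bb0 n_def)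
      qed
      have "condk n1 w c k" unfolding condk_def
        using wk trail dist hb0 par by (simp add: h_def g_def)
      then show "condk n1 w c k \<and> Nn w' c'" using nn by simp
    next
      assume "condk n1 w c k \<and> Nn w' c'"
      then have wk: "\<not> w ! k" and trail: "\<And>k'. k < k' \<Longrightarrow> k' < n \<Longrightarrow> \<not> w ! k'"
        and dist: "g + 1 \<le> h + n1" and par: "h = 1 \<or> c ! (h - 1)" and nn: "Nn w' c'"
        by (auto simp: condk_def h_def g_def n_def)
      have hu: "height ?u = h" using wk by (simp add: h_def)
      have unc: "is_uncle ?u" using wk par by (simp add: is_uncle_def h_def)
      obtain b0 where b0: "b0 \<in> set (cycle_blocks w' c')" "honest b0" "official b0" "height b0 = 1"
        using NB(3) nn by blast
      let ?b = "shift_blk g n b0"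
      have bB: "?b \<in> set B" using b0 setB by blast
      have cr: "can_refer n1 ?b ?u" using b0 k hle dist hu by (simp add: can_refer_def)
      have mn: "height ?b \<le> height b'" if "b' \<in> set B" "can_refer n1 b' ?u" for b'
      proof -
        from that(1) setB consider (a) k' where "k' < n" "b' = fblk w c k'"
          | (b) b0' where "b0' \<in> set (cycle_blocks w' c')" "b' = shift_blk g n b0'" by auto
        then show ?thesis
        proof cases
          case a
          then show ?thesis using that(2) trail[of "k'"] by (auto simp: can_refer_def)
        next
          case b
          then show ?thesis using NB(1) b0 by auto
        qed
      qed
      have "can_refer n1 ?b ?u \<and> honest ?b \<and> (\<forall>b'\<in>set B. can_refer n1 b' ?u \<longrightarrow> height ?b \<le> height b')"
        using cr b0 mn by simp
      then show "Q ?u" unfolding Q_def using unc bB by blast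
    qed
  qed
  show ?thesis
  proof (cases "Nn w' c'")
    case True
    then have "{k. k < n \<and> Q (fblk w c k)} = {k. k < length w \<and> condk n1 w c k}"
      using key by (auto simp: n_def)
    then show ?thesis using U True by simp
  next
    case False
    then have "{k. k < n \<and> Q (fblk w c k)} = {}" using key by auto
    then show ?thesis using U False by simp
  qed
qed



definition U1 :: "bool list \<Rightarrow> nat" where "U1 w = (if w = [True, False, False] then 1 else 0)"

definition U2 :: "nat \<Rightarrow> bool list \<Rightarrow> bool list \<Rightarrow> nat" where
  "U2 n1 w c = (if isfork w then card {k. k < length w \<and> condk n1 w c k} else 0)"

lemma U_h_H: "U_h n1 ([False], c) (w', c') = 0"
  by (simp add: U_h_def cycle_blocks_def is_uncle_def)

lemma U_h_SHH:
  assumes n1: "1 \<le> n1"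
  shows "U_h n1 ([True, False, False], c) (w', c') = 1"
proof -
  define L where "L = cycle_blocks [True, False, False] c"
  define B where "B = L @ map (shift_blk 2 (length [True, False, False])) (cycle_blocks w' c')"
  define Q where "Q = (\<lambda>u. is_uncle u \<and> (\<exists>b\<in>set B. can_refer n1 b u \<and> honest b \<and>
           (\<forall>b'\<in>set B. can_refer n1 b' u \<longrightarrow> height b \<le> height b')))"
  have U: "U_h n1 ([True, False, False], c) (w', c') = length (filter Q L)"
    by (simp add: U_h_def growth_def L_def B_def Q_def Let_def)
  have gen: "Q u" if "is_uncle u" "b \<in> set B" "can_refer n1 b u" "honest b" "height b = Suc (height u)" for u b
  proof -
    have "\<forall>b'\<in>set B. can_refer n1 b' u \<longrightarrow> height b \<le> height b'"
      using that(5) by (auto simp: can_refer_def)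
    then show ?thesis unfolding Q_def using that by blast
  qed
  have L3: "L = [L ! 0, L ! 1, L ! 2]" by (simp add: L_def cycle_blocks_def)
  have f0: "official (L ! 0) = c ! 1" "height (L ! 0) = 1" "published (L ! 0) = 1" "parent_official (L ! 0)"
    by (simp_all add: L_def cycle_blocks_def)
  have f1: "official (L ! 1) = (\<not> c ! 1)" "height (L ! 1) = 1" "published (L ! 1) = 1" "parent_official (L ! 1)"
    by (simp_all add: L_def cycle_blocks_def)
  have f2: "official (L ! 2)" "honest (L ! 2)" "height (L ! 2) = 2" "mined (L ! 2) = 2"
    by (simp_all add: L_def cycle_blocks_def)
  have "2 < length L" by (simp add: L_def cycle_blocks_def)
  then have in2: "L ! 2 \<in> set B" by (simp add: B_def)
  have q0: "Q (L ! 0) \<longleftrightarrow> \<not> c ! 1"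
  proof
    assume "Q (L ! 0)" then show "\<not> c ! 1" using f0 by (auto simp: Q_def is_uncle_def)
  next
    assume "\<not> c ! 1"
    then show "Q (L ! 0)"
      by (intro gen[OF _ in2]) (use f0 f2 n1 in \<open>auto simp: is_uncle_def can_refer_def\<close>)
  qed
  have q1: "Q (L ! 1) \<longleftrightarrow> c ! 1"
  proof
    assume "Q (L ! 1)" then show "c ! 1" using f1 by (auto simp: Q_def is_uncle_def)
  next
    assume "c ! 1"
    then show "Q (L ! 1)"
      by (intro gen[OF _ in2]) (use f1 f2 n1 in \<open>auto simp: is_uncle_def can_refer_def\<close>)
  qed
  have q2: "\<not> Q (L ! 2)" using f2 by (simp add: Q_def is_uncle_def)
  have "length (filter Q [L ! 0, L ! 1, L ! 2]) = 1"
    using q0 q1 q2 by (cases "c ! 1") simp_all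
  then show ?thesis using U L3 by metis
qed

lemma not_isfork: "\<not> isfork [False]" "\<not> isfork [True, False, False]"
  by (auto simp: isfork_def fw_def)

lemma U_h_char:
  assumes V: "valid_cycle w" and V': "valid_cycle w'" and n1: "1 \<le> n1"
  shows "U_h n1 (w, c) (w', c') = U1 w + U2 n1 w c * (if Nn w' c' then 1 else 0)"
proof -
  consider "w = [False]" | "w = [True, False, False]" | "isfork w" using V valid_cases by blast
  then show ?thesis
  proof cases
    case 1 then show ?thesis by (simp add: U_h_H U1_def U2_def not_isfork)
  next
    case 2 then show ?thesis using n1 by (simp add: U_h_SHH U1_def U2_def not_isfork)
  next
    case 3
    then have "U1 w = 0" using isfork_ne[OF 3] by (simp add: U1_def)
    then show ?thesis using U_h_fork[OF 3 V', of n1 c c'] 3 by (simp add: U2_def)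
  qed
qed



lemma ends_le: "ends j x \<Longrightarrow> j \<le> length x" by (auto simp: ends_def)
lemma ends_count_H: "ends j x \<Longrightarrow> j \<le> count_H x" by (auto simp: ends_def)

lemma ends_iff_nth:
  assumes "j \<le> length x"
  shows "(\<forall>i. length x - j \<le> i \<and> i < length x \<longrightarrow> \<not> x ! i) \<longleftrightarrow> ends j x"
proof
  assume H: "\<forall>i. length x - j \<le> i \<and> i < length x \<longrightarrow> \<not> x ! i"
  have "drop (length x - j) x = replicate j False"
  proof (rule nth_equalityI)
    show "length (drop (length x - j) x) = length (replicate j False)" using assms by simp
    fix i assume "i < length (drop (length x - j) x)"
    then have "length x - j + i < length x" using assms by simp
    then show "drop (length x - j) x ! i = replicate j False ! i"
      using H assms by (simp add: nth_drop)
  qed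
  then have "x = take (length x - j) x @ replicate j False" by (metis append_take_drop_id)
  then show "ends j x" unfolding ends_def by blast
next
  assume "ends j x"
  then obtain a where x: "x = a @ replicate j False" by (auto simp: ends_def)
  show "\<forall>i. length x - j \<le> i \<and> i < length x \<longrightarrow> \<not> x ! i"
    using x by (auto simp: nth_append)
qed

lemma rep_Suc_snoc: "replicate (Suc j) b = replicate j b @ [b]"
  by (induction j) auto

lemma ends_Suc_snoc: "ends (Suc j) (x @ [b]) \<longleftrightarrow> \<not> b \<and> ends j x"
proof
  assume "ends (Suc j) (x @ [b])"
  then obtain a where "x @ [b] = a @ replicate (Suc j) False" by (auto simp: ends_def)
  then have "x @ [b] = (a @ replicate j False) @ [False]" by (simp only: rep_Suc_snoc append_assoc)
  then have "x = a @ replicate j False" "b = False" by simp_all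
  then show "\<not> b \<and> ends j x" by (auto simp: ends_def)
next
  assume "\<not> b \<and> ends j x"
  then obtain a where "x = a @ replicate j False" "b = False" by (auto simp: ends_def)
  then have "x @ [b] = a @ replicate (Suc j) False" by (simp only: rep_Suc_snoc append_assoc)
  then show "ends (Suc j) (x @ [b])" by (auto simp: ends_def)
qed

lemma ends_Cons_True: "ends j (True # x) \<longleftrightarrow> ends j x \<and> j \<le> length x"
proof
  assume "ends j (True # x)"
  then obtain a where e: "True # x = a @ replicate j False" by (auto simp: ends_def)
  show "ends j x \<and> j \<le> length x"
  proof (cases a)
    case Nil
    then have "True # x = replicate j False" using e by simp
    then show ?thesis by (cases j) simp_all
  next
    case (Cons y a')
    then have "x = a' @ replicate j False" using e by simp
    then show ?thesis by (auto simp: ends_def)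
  qed
next
  assume "ends j x \<and> j \<le> length x"
  then obtain a where "x = a @ replicate j False" by (auto simp: ends_def)
  then have "True # x = (True # a) @ replicate j False" by simp
  then show "ends j (True # x)" unfolding ends_def by blast
qed

lemma ends_fw: "ends (Suc j) (fw v) \<longleftrightarrow> ends j v"
proof -
  have "ends (Suc j) (fw v) \<longleftrightarrow> ends j v \<and> Suc j \<le> Suc (length v) \<and> Suc j \<le> Suc (Suc (length v))"
    by (simp add: fw_def ends_Cons_True ends_Suc_snoc)
  then show ?thesis using ends_le[of j v] by auto
qed

lemma card_sum_real: "real (card {k. k < (n::nat) \<and> P k}) = (\<Sum>k<n. if P k then 1 else 0)"
proof (induction n)
  case 0 then show ?case by simp
next
  case (Suc n)
  have e: "{k. k < Suc n \<and> P k} = (if P n then insert n {k. k < n \<and> P k} else {k. k < n \<and> P k})"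
    by (auto simp: less_Suc_eq)
  show ?case using Suc by (simp add: e)
qed

lemma Tk_fw:
  assumes v: "okp 0 0 v" and j: "j < length (fw v)" and n1: "2 \<le> n1"
  defines "w \<equiv> fw v"
  defines "k \<equiv> length (fw v) - Suc j"
  shows "(\<not> w ! k \<and> (\<forall>k'. k < k' \<and> k' < length w \<longrightarrow> \<not> w ! k') \<and> count_S w + 1 \<le> count_H (take (Suc k) w) + n1)
           \<longleftrightarrow> (j < n1 - 1 \<and> ends j v)"
    and "ends j v \<Longrightarrow> count_H (take (Suc k) w) = count_H v + 1 - j"
proof -
  have kn: "k < length w" using j by (simp add: k_def w_def)
  have tr0: "(\<not> w ! k \<and> (\<forall>k'. k < k' \<and> k' < length w \<longrightarrow> \<not> w ! k')) \<longleftrightarrow> (\<forall>i. length w - Suc j \<le> i \<and> i < length w \<longrightarrow> \<not> w ! i)"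
  proof
    assume H: "\<not> w ! k \<and> (\<forall>k'. k < k' \<and> k' < length w \<longrightarrow> \<not> w ! k')"
    show "\<forall>i. length w - Suc j \<le> i \<and> i < length w \<longrightarrow> \<not> w ! i"
    proof (intro allI impI)
      fix i assume i: "length w - Suc j \<le> i \<and> i < length w"
      show "\<not> w ! i"
      proof (cases "i = k")
        case True then show ?thesis using H by simp
      next
        case False
        then have "k < i" using i by (simp add: k_def w_def)
        then show ?thesis using H i by blast
      qed
    qed
  next
    assume H: "\<forall>i. length w - Suc j \<le> i \<and> i < length w \<longrightarrow> \<not> w ! i"
    have "\<not> w ! k" using H kn by (simp add: k_def w_def)
    moreover have "\<forall>k'. k < k' \<and> k' < length w \<longrightarrow> \<not> w ! k'"
      using H by (simp add: k_def w_def)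
    ultimately show "\<not> w ! k \<and> (\<forall>k'. k < k' \<and> k' < length w \<longrightarrow> \<not> w ! k')" by blast
  qed
  also have "\<dots> \<longleftrightarrow> ends (Suc j) w" using j by (intro ends_iff_nth) (simp add: w_def)
  also have "\<dots> \<longleftrightarrow> ends j v" by (simp add: w_def ends_fw)
  finally have tr: "(\<not> w ! k \<and> (\<forall>k'. k < k' \<and> k' < length w \<longrightarrow> \<not> w ! k')) \<longleftrightarrow> ends j v" .
  have hk: "count_H (take (Suc k) w) = count_H v + 1 - j" if e: "ends j v"
  proof -
    from e have "ends (Suc j) w" by (simp add: w_def ends_fw)
    then obtain a where a: "w = a @ replicate (Suc j) False" by (auto simp: ends_def)
    have la: "length a = k" using a by (simp add: k_def w_def[symmetric])
    have "take (Suc k) w = a @ [False]" using a la by simp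
    then have "count_H (take (Suc k) w) = count_H a + 1" by simp
    moreover have "count_H w = count_H a + Suc j" using a by simp
    moreover have "count_H w = count_H v + 1" by (simp add: w_def fw_def)
    ultimately show ?thesis by simp
  qed
  then show "ends j v \<Longrightarrow> count_H (take (Suc k) w) = count_H v + 1 - j" .
  have cSv: "count_S v = count_H v" using v by (simp add: okp_count)
  have cSw: "count_S w = count_H v + 2" using cSv by (simp add: w_def fw_def)
  show "(\<not> w ! k \<and> (\<forall>k'. k < k' \<and> k' < length w \<longrightarrow> \<not> w ! k') \<and> count_S w + 1 \<le> count_H (take (Suc k) w) + n1)
           \<longleftrightarrow> (j < n1 - 1 \<and> ends j v)"
  proof
    assume A: "\<not> w ! k \<and> (\<forall>k'. k < k' \<and> k' < length w \<longrightarrow> \<not> w ! k') \<and> count_S w + 1 \<le> count_H (take (Suc k) w) + n1"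
    then have e: "ends j v" using tr by blast
    have jl: "j \<le> count_H v" using e by (rule ends_count_H)
    have "count_H v + 3 \<le> count_H v + 1 - j + n1" using A hk[OF e] cSw by simp
    then have "j < n1 - 1" using jl n1 by arith
    then show "j < n1 - 1 \<and> ends j v" using e by simp
  next
    assume B: "j < n1 - 1 \<and> ends j v"
    then have e: "ends j v" by simp
    have jl: "j \<le> count_H v" using e by (rule ends_count_H)
    have "count_S w + 1 \<le> count_H (take (Suc k) w) + n1"
      using B hk[OF e] cSw jl n1 by arith
    then show "\<not> w ! k \<and> (\<forall>k'. k < k' \<and> k' < length w \<longrightarrow> \<not> w ! k') \<and> count_S w + 1 \<le> count_H (take (Suc k) w) + n1"
      using tr e by blast
  qed
qed



lemma Ec_fork:
  assumes v: "okp 0 0 v" and n1: "2 \<le> n1"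
  shows "(\<Sum>c\<in>{c. length c = count_H (fw v)}. coinp \<gamma> c * real (U2 n1 (fw v) c))
       = (\<Sum>j<n1-1. if ends j v then (if j = count_S v then 1 else \<gamma>) else 0)"
proof -
  define w where "w = fw v"
  define n where "n = length w"
  define L where "L = {c::bool list. length c = count_H w}"
  define T where "T k \<longleftrightarrow> (\<not> w ! k \<and> (\<forall>k'. k < k' \<and> k' < length w \<longrightarrow> \<not> w ! k') \<and> count_S w + 1 \<le> count_H (take (Suc k) w) + n1)" for k
  define h where "h k = count_H (take (Suc k) w)" for k
  have isf: "isfork w" using v by (auto simp: isfork_def w_def)
  have condk_eq: "condk n1 w c k \<longleftrightarrow> T k \<and> (h k = 1 \<or> c ! (h k - 1))" for c k
    by (auto simp: condk_def T_def h_def)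
  have U2eq: "real (U2 n1 w c) = (\<Sum>k<n. if T k \<and> (h k = 1 \<or> c ! (h k - 1)) then 1 else 0)" for c
    unfolding U2_def using isf by (simp add: card_sum_real condk_eq n_def)
  have inner: "(\<Sum>c\<in>L. coinp \<gamma> c * (if h k = 1 \<or> c ! (h k - 1) then 1 else 0)) = (if h k = 1 then 1 else \<gamma>)"
    if "k < n" "\<not> w ! k" for k
  proof -
    have h1: "1 \<le> h k" using that by (simp add: h_def count_H_take_Suc n_def)
    have h2: "h k \<le> count_H w" by (simp add: h_def count_H_take_le)
    show ?thesis
    proof (cases "h k = 1")
      case True then show ?thesis using C1[of \<gamma> "count_H w"] by (simp add: L_def)
    next
      case False
      then have "h k - 1 < count_H w" using h1 h2 by simp
      then show ?thesis using C2[of "h k - 1" "count_H w" \<gamma>] False by (simp add: L_def)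
    qed
  qed
  have step1: "(\<Sum>c\<in>L. coinp \<gamma> c * real (U2 n1 w c)) = (\<Sum>k<n. if T k then (if h k = 1 then 1 else \<gamma>) else 0)"
  proof -
    have "(\<Sum>c\<in>L. coinp \<gamma> c * real (U2 n1 w c)) = (\<Sum>c\<in>L. \<Sum>k<n. coinp \<gamma> c * (if T k \<and> (h k = 1 \<or> c ! (h k - 1)) then 1 else 0))"
      by (simp add: U2eq sum_distrib_left)
    also have "\<dots> = (\<Sum>k<n. \<Sum>c\<in>L. coinp \<gamma> c * (if T k \<and> (h k = 1 \<or> c ! (h k - 1)) then 1 else 0))"
      by (rule sum.swap)
    also have "\<dots> = (\<Sum>k<n. if T k then (if h k = 1 then 1 else \<gamma>) else 0)"
    proof (rule sum.cong[OF refl])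
      fix k assume k: "k \<in> {..<n}"
      show "(\<Sum>c\<in>L. coinp \<gamma> c * (if T k \<and> (h k = 1 \<or> c ! (h k - 1)) then 1 else 0)) = (if T k then (if h k = 1 then 1 else \<gamma>) else 0)"
      proof (cases "T k")
        case True
        then have "\<not> w ! k" by (simp add: T_def)
        then show ?thesis using inner[of k] k True by simp
      next
        case False then show ?thesis by simp
      qed
    qed
    finally show ?thesis .
  qed
  have cSv: "count_S v = count_H v" using v by (simp add: okp_count)
  have step2: "(\<Sum>k<n. if T k then (if h k = 1 then 1 else \<gamma>) else 0) = (\<Sum>j<n. if j < n1 - 1 \<and> ends j v then (if j = count_S v then 1 else \<gamma>) else 0)"
  proof -
    have "(\<Sum>k<n. if T k then (if h k = 1 then 1 else \<gamma>) else (0::real)) = (\<Sum>j<n. (\<lambda>k. if T k then (if h k = 1 then 1 else \<gamma>) else 0) (n - Suc j))"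
      by (rule sum.nat_diff_reindex[symmetric])
    also have "\<dots> = (\<Sum>j<n. if j < n1 - 1 \<and> ends j v then (if j = count_S v then 1 else \<gamma>) else 0)"
    proof (rule sum.cong[OF refl])
      fix j assume "j \<in> {..<n}"
      then have j: "j < length (fw v)" by (simp add: n_def w_def)
      note t = Tk_fw[OF v j n1]
      have TT: "T (n - Suc j) \<longleftrightarrow> (j < n1 - 1 \<and> ends j v)" using t(1) by (simp add: T_def n_def w_def)
      show "(\<lambda>k. if T k then (if h k = 1 then 1 else \<gamma>) else 0) (n - Suc j) = (if j < n1 - 1 \<and> ends j v then (if j = count_S v then 1 else \<gamma>) else 0)"
      proof (cases "j < n1 - 1 \<and> ends j v")
        case True
        then have hh: "h (n - Suc j) = count_H v + 1 - j" using t(2) by (simp add: h_def n_def w_def)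
        have "j \<le> count_H v" using True ends_count_H by blast
        then have "(h (n - Suc j) = 1) \<longleftrightarrow> (j = count_S v)" using cSv hh by auto
        then show ?thesis using TT True by simp
      next
        case False
        then have nT: "\<not> T (n - Suc j)" using TT by blast
        have l: "(\<lambda>k. if T k then (if h k = 1 then 1 else \<gamma>) else (0::real)) (n - Suc j) = 0" using nT by simp
        have r: "(if j < n1 - 1 \<and> ends j v then (if j = count_S v then 1 else \<gamma>) else (0::real)) = 0" by (rule if_not_P[OF False])
        show ?thesis using l r by simp
      qed
    qed
    finally show ?thesis .
  qed
  have step3: "(\<Sum>j<n. if j < n1 - 1 \<and> ends j v then (if j = count_S v then 1 else \<gamma>) else (0::real)) = (\<Sum>j<n1-1. if ends j v then (if j = count_S v then 1 else \<gamma>) else 0)"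
  proof -
    define f where "f j = (if ends j v then (if j = count_S v then 1 else \<gamma>) else (0::real))" for j
    have a: "(\<Sum>j<n. if j < n1 - 1 \<and> ends j v then (if j = count_S v then 1 else \<gamma>) else (0::real)) = (\<Sum>j\<in>{..<n} \<inter> {..<n1-1}. f j)"
      by (subst sum.inter_restrict) (auto simp: f_def intro!: sum.cong)
    have f0: "f j = 0" if "\<not> j < n" for j
    proof -
      have "\<not> ends j v" using that ends_le[of j v] by (auto simp: n_def w_def fw_def)
      then show ?thesis by (simp add: f_def)
    qed
    have b: "(\<Sum>j<n1-1. f j) = (\<Sum>j\<in>{..<n1-1} \<inter> {..<n}. f j)"
      by (subst sum.inter_restrict) (auto simp: f0 intro!: sum.cong)
    show ?thesis using a b by (simp add: f_def Int_commute)
  qed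
  show ?thesis using step1 step2 step3 by (simp add: L_def w_def)
qed



lemma has_sum_restrict:
  fixes f :: "'a \<Rightarrow> real"
  assumes "(f has_sum s) {v. P v \<and> R v}"
  shows "((\<lambda>v. f v * (if R v then 1 else 0)) has_sum s) {v. P v}"
  using assms by (subst has_sum_cong_neutral[where T="{v. P v \<and> R v}" and g=f]) auto

lemma U2_SHS: "U2 n1 [True, False, True] c = 0"
proof -
  have "{k. k < length [True, False, True] \<and> condk n1 [True, False, True] c k} = {}"
  proof (rule ccontr)
    assume "{k. k < length [True, False, True] \<and> condk n1 [True, False, True] c k} \<noteq> {}"
    then obtain k where k0: "k < length [True, False, True]" and k2: "condk n1 [True, False, True] c k" by auto
    have k: "k < 3" "condk n1 [True, False, True] c k" using k0 k2 by simp_all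
    from k(2) have nk: "\<not> [True, False, True] ! k" and tr: "\<forall>k'. k < k' \<and> k' < 3 \<longrightarrow> \<not> [True, False, True] ! k'"
      by (simp_all add: condk_def)
    consider "k = 0" | "k = 1" | "k = 2" using k(1) by arith
    then show False
    proof cases
      case 1 then show False using nk by simp
    next
      case 2 then show False using tr[rule_format, of 2] by simp
    next
      case 3 then show False using nk by simp
    qed
  qed
  then show ?thesis by (simp add: U2_def)
qed

lemma P_nz_valid: "outcome_prob p q \<gamma> (w, c) \<noteq> 0 \<Longrightarrow> valid_cycle w"
  by (auto simp: outcome_prob_eq cycle_prob_def split: if_splits)

context pq
begin

lemma val_total: "p * 1 + p * q^2 * 1 + p^2 * q * 1 + q^2 = 1"
  using pq1 by algebra

lemma tot:
  assumes g: "0 \<le> \<gamma>" "\<gamma> \<le> 1"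
  shows "(outcome_prob p q \<gamma> has_sum 1) UNIV"
proof -
  have X: "((\<lambda>v. q^2 * p * wt p q v * (\<lambda>_. 1::real) (fw v)) has_sum q^2) {v. okp 0 0 v}"
    using has_sum_cmult_right[OF K_has_sum[of 0], of "q^2 * p"] p0 by (simp add: K_val)
  have H: "((\<lambda>w. cycle_prob p q w * (\<lambda>_. 1::real) w) has_sum (p * 1 + p * q^2 * 1 + p^2 * q * 1 + q^2)) UNIV"
    by (rule has_sum_w[OF X])
  have G: "((\<lambda>w. cycle_prob p q w * (\<Sum>c\<in>{c. length c = count_H w}. coinp \<gamma> c * 1)) has_sum 1) UNIV"
    using H val_total by (simp add: C1)
  have "((\<lambda>\<omega>. outcome_prob p q \<gamma> \<omega> * 1) has_sum 1) UNIV"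
    by (rule has_sum_wc[where \<phi>="\<lambda>_. 1", OF _ g _ _ G]) (use p0 q0 in auto)
  then show ?thesis by simp
qed

lemma U1sum:
  assumes g: "0 \<le> \<gamma>" "\<gamma> \<le> 1"
  shows "((\<lambda>\<omega>. outcome_prob p q \<gamma> \<omega> * real (U1 (fst \<omega>))) has_sum (p^2 * q)) UNIV"
proof -
  have X: "((\<lambda>v. q^2 * p * wt p q v * real (U1 (fw v))) has_sum 0) {v. okp 0 0 v}"
    by (simp add: U1_def fw_def)
  have H: "((\<lambda>w. cycle_prob p q w * real (U1 w)) has_sum (p * real (U1 [False]) + p * q^2 * real (U1 [True, False, True]) + p^2 * q * real (U1 [True, False, False]) + 0)) UNIV"
    by (rule has_sum_w[OF X])
  have G: "((\<lambda>w. cycle_prob p q w * (\<Sum>c\<in>{c. length c = count_H w}. coinp \<gamma> c * real (U1 (fst (w, c))))) has_sum (p^2 * q)) UNIV"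
    using H by (simp add: C1 U1_def sum_distrib_right[symmetric])
  show ?thesis
    by (rule has_sum_wc[where \<phi>="\<lambda>\<omega>. real (U1 (fst \<omega>))", OF _ g _ _ G]) (use p0 q0 in auto)
qed

lemma Dsum:
  assumes g: "0 \<le> \<gamma>" "\<gamma> \<le> 1"
  shows "((\<lambda>\<omega>. outcome_prob p q \<gamma> \<omega> * (if Nn (fst \<omega>) (snd \<omega>) then 1 else 0)) has_sum (p + (1 - \<gamma>) * p^2 * q)) UNIV"
proof -
  define Gd where "Gd w = (if w = [False] then 1 else if w = [True, False, False] then 1 - \<gamma> else (0::real))" for w
  have Geq: "(\<Sum>c\<in>{c. length c = count_H w}. coinp \<gamma> c * (if Nn w c then 1 else 0)) = Gd w" for w
  proof -
    consider "w = [False]" | "w = [True, False, False]" | "w \<noteq> [False] \<and> w \<noteq> [True, False, False]" by blast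
    then show ?thesis
    proof cases
      case 1 then show ?thesis using C1[of \<gamma> 1] by (simp add: Nn_def Gd_def)
    next
      case 2
      have cH: "count_H w = 2" using 2 by (simp add: count_H_def)
      have "(\<Sum>c\<in>{c. length c = count_H w}. coinp \<gamma> c * (if c ! 1 then 0 else 1)) = 1 - \<gamma>"
        by (rule C3) (simp add: cH)
      moreover have "(\<Sum>c\<in>{c. length c = count_H w}. coinp \<gamma> c * (if Nn w c then 1 else 0)) = (\<Sum>c\<in>{c. length c = count_H w}. coinp \<gamma> c * (if c ! 1 then 0 else 1))"
        using 2 by (intro sum.cong) (auto simp: Nn_def)
      moreover have "Gd w = 1 - \<gamma>" using 2 by (simp add: Gd_def)
      ultimately show ?thesis by simp
    next
      case 3 then show ?thesis by (simp add: Nn_def Gd_def)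
    qed
  qed
  have X: "((\<lambda>v. q^2 * p * wt p q v * Gd (fw v)) has_sum 0) {v. okp 0 0 v}"
    by (simp add: Gd_def fw_def)
  have H: "((\<lambda>w. cycle_prob p q w * Gd w) has_sum (p * Gd [False] + p * q^2 * Gd [True, False, True] + p^2 * q * Gd [True, False, False] + 0)) UNIV"
    by (rule has_sum_w[OF X])
  have G: "((\<lambda>w. cycle_prob p q w * (\<Sum>c\<in>{c. length c = count_H w}. coinp \<gamma> c * (if Nn (fst (w, c)) (snd (w, c)) then 1 else 0))) has_sum (p + (1 - \<gamma>) * p^2 * q)) UNIV"
    using H by (simp add: Geq Gd_def algebra_simps)
  show ?thesis
    by (rule has_sum_wc[where \<phi>="\<lambda>\<omega>. if Nn (fst \<omega>) (snd \<omega>) then 1 else 0", OF _ g _ _ G]) (use p0 q0 in auto)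
qed

lemma V_alg:
  "q^2 * p * (\<Sum>j<N. \<gamma> * (q ^ j / p) + (1 - \<gamma>) * (p * q) ^ j)
     = (q^2 / p) * (1 - q^N) * \<gamma> + (1 - \<gamma>) * p * q^2 * (1 - (p * q)^N) / (1 - p * q)"
proof -
  have q1: "q \<noteq> 1" using pq1 qp by auto
  have pq_lt: "p * q < 1"
  proof -
    have "p * q < 1 * 1" using p0 q0 pq1 by (intro mult_strict_mono) auto
    then show ?thesis by simp
  qed
  have s1: "(\<Sum>j<N. q ^ j) = (1 - q ^ N) / p"
    using q1 pq1 by (simp add: sum_gp_strict)
  have s2: "(\<Sum>j<N. (p * q) ^ j) = (1 - (p * q) ^ N) / (1 - p * q)"
    using pq_lt by (simp add: sum_gp_strict)
  have "(\<Sum>j<N. \<gamma> * (q ^ j / p) + (1 - \<gamma>) * (p * q) ^ j) = (\<gamma> / p) * (\<Sum>j<N. q ^ j) + (1 - \<gamma>) * (\<Sum>j<N. (p * q) ^ j)"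
    by (simp add: sum.distrib sum_distrib_left)
  also have "\<dots> = (\<gamma> / p) * ((1 - q ^ N) / p) + (1 - \<gamma>) * ((1 - (p * q) ^ N) / (1 - p * q))"
    by (simp only: s1 s2)
  finally have e: "(\<Sum>j<N. \<gamma> * (q ^ j / p) + (1 - \<gamma>) * (p * q) ^ j) = (\<gamma> / p) * ((1 - q ^ N) / p) + (1 - \<gamma>) * ((1 - (p * q) ^ N) / (1 - p * q))" .
  have ne: "1 - p * q \<noteq> 0" using pq_lt by simp
  show ?thesis unfolding e using p0 ne by (simp add: field_simps power2_eq_square)
qed

lemma U2sum:
  assumes g: "0 \<le> \<gamma>" "\<gamma> \<le> 1" and n1: "2 \<le> n1"
  shows "((\<lambda>\<omega>. outcome_prob p q \<gamma> \<omega> * real (U2 n1 (fst \<omega>) (snd \<omega>))) has_sum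
     ((q^2 / p) * (1 - q^(n1 - 1)) * \<gamma> + (1 - \<gamma>) * p * q^2 * (1 - (p * q)^(n1 - 1)) / (1 - p * q))) UNIV"
proof -
  define N where "N = n1 - 1"
  define G2 where "G2 w = (\<Sum>c\<in>{c. length c = count_H w}. coinp \<gamma> c * real (U2 n1 w c))" for w
  define Hv where "Hv v = (\<Sum>j<N. if ends j v then (if j = count_S v then 1 else \<gamma>) else (0::real))" for v
  have each: "((\<lambda>v. wt p q v * (if ends j v then (if j = count_S v then 1 else \<gamma>) else 0)) has_sum (\<gamma> * (q ^ j / p) + (1 - \<gamma>) * (p * q) ^ j)) {v. okp 0 0 v}" for j
  proof -
    have a: "((\<lambda>v. wt p q v * (if ends j v then 1 else 0)) has_sum (q ^ j / p)) {v. okp 0 0 v}"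
      using has_sum_restrict[OF S1[of j]] .
    have b: "((\<lambda>v. wt p q v * (if ends j v \<and> count_S v = j then 1 else 0)) has_sum ((p * q) ^ j)) {v. okp 0 0 v}"
      using has_sum_restrict[where f="wt p q" and P="\<lambda>v. okp 0 0 v" and R="\<lambda>v. ends j v \<and> count_S v = j"] S2[of j] by simp
    have "((\<lambda>v. \<gamma> * (wt p q v * (if ends j v then 1 else 0)) + (1 - \<gamma>) * (wt p q v * (if ends j v \<and> count_S v = j then 1 else 0)))
        has_sum (\<gamma> * (q ^ j / p) + (1 - \<gamma>) * (p * q) ^ j)) {v. okp 0 0 v}"
      by (intro has_sum_add has_sum_cmult_right a b)
    then show ?thesis
      by (rule has_sum_cong[THEN iffD1, rotated]) (auto simp: algebra_simps)
  qed
  have sumj: "((\<lambda>v. \<Sum>j<N. wt p q v * (if ends j v then (if j = count_S v then 1 else \<gamma>) else 0)) has_sum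
      (\<Sum>j<N. \<gamma> * (q ^ j / p) + (1 - \<gamma>) * (p * q) ^ j)) {v. okp 0 0 v}"
    by (intro has_sum_sum_fin finite_lessThan each)
  have X: "((\<lambda>v. q^2 * p * wt p q v * G2 (fw v)) has_sum (q^2 * p * (\<Sum>j<N. \<gamma> * (q ^ j / p) + (1 - \<gamma>) * (p * q) ^ j))) {v. okp 0 0 v}"
  proof (rule has_sum_cong[THEN iffD1, OF _ has_sum_cmult_right[OF sumj]])
    fix v assume "v \<in> {v. okp 0 0 v}"
    then have "G2 (fw v) = Hv v" using Ec_fork[of v n1 \<gamma>] n1 by (simp add: G2_def Hv_def N_def)
    then show "q^2 * p * (\<Sum>j<N. wt p q v * (if ends j v then (if j = count_S v then 1 else \<gamma>) else 0)) = q^2 * p * wt p q v * G2 (fw v)"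
      by (simp add: Hv_def sum_distrib_left mult.assoc)
  qed
  have H: "((\<lambda>w. cycle_prob p q w * G2 w) has_sum (p * G2 [False] + p * q^2 * G2 [True, False, True] + p^2 * q * G2 [True, False, False]
      + q^2 * p * (\<Sum>j<N. \<gamma> * (q ^ j / p) + (1 - \<gamma>) * (p * q) ^ j))) UNIV"
    by (rule has_sum_w[OF X])
  have z: "G2 [False] = 0" "G2 [True, False, True] = 0" "G2 [True, False, False] = 0"
    by (simp add: G2_def U2_def not_isfork, simp add: G2_def U2_SHS, simp add: G2_def U2_def not_isfork)
  have G: "((\<lambda>w. cycle_prob p q w * (\<Sum>c\<in>{c. length c = count_H w}. coinp \<gamma> c * real (U2 n1 (fst (w, c)) (snd (w, c)))))
     has_sum ((q^2 / p) * (1 - q^(n1 - 1)) * \<gamma> + (1 - \<gamma>) * p * q^2 * (1 - (p * q)^(n1 - 1)) / (1 - p * q))) UNIV"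
    using H unfolding z V_alg by (simp add: G2_def N_def)
  show ?thesis
    by (rule has_sum_wc[where \<phi>="\<lambda>\<omega>. real (U2 n1 (fst \<omega>) (snd \<omega>))", OF _ g _ _ G]) (use p0 q0 in auto)
qed

end



theorem proposition9:
  fixes p q \<gamma> :: real and n1 :: nat
  assumes "p + q = 1" and "0 < q" and "q < p"
    and "0 \<le> \<gamma>" and "\<gamma> \<le> 1" and "2 \<le> n1"
  shows "((\<lambda>(\<omega>, \<omega>'). outcome_prob p q \<gamma> \<omega> * outcome_prob p q \<gamma> \<omega>' * real (U_h n1 \<omega> \<omega>'))
           has_sum
         (p^2 * q + (p + (1 - \<gamma>) * p^2 * q) *
            ((q^2 / p) * (1 - q^(n1 - 1)) * \<gamma>
             + (1 - \<gamma>) * p * q^2 * (1 - (p * q)^(n1 - 1)) / (1 - p * q)))) UNIV"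
proof -
  interpret pq p q using assms(1-3) by unfold_locales
  have g: "0 \<le> \<gamma>" "\<gamma> \<le> 1" using assms(4,5) by simp_all
  define V where "V = (q^2 / p) * (1 - q^(n1 - 1)) * \<gamma> + (1 - \<gamma>) * p * q^2 * (1 - (p * q)^(n1 - 1)) / (1 - p * q)"
  define P where "P = outcome_prob p q \<gamma>"
  define A where "A \<omega> = P \<omega> * real (U1 (fst \<omega>))" for \<omega>
  define C where "C \<omega> = P \<omega> * real (U2 n1 (fst \<omega>) (snd \<omega>))" for \<omega>
  define D where "D \<omega> = P \<omega> * (if Nn (fst \<omega>) (snd \<omega>) then 1 else 0)" for \<omega>
  have Pnn: "0 \<le> P \<omega>" for \<omega> unfolding P_def using p0 q0 g by (intro outcome_prob_nonneg) auto
  have hP: "(P has_sum 1) UNIV" unfolding P_def by (rule tot[OF g])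
  have hA: "(A has_sum (p^2 * q)) UNIV" unfolding A_def P_def by (rule U1sum[OF g])
  have hC: "(C has_sum V) UNIV" unfolding C_def P_def V_def by (rule U2sum[OF g assms(6)])
  have hD: "(D has_sum (p + (1 - \<gamma>) * p^2 * q)) UNIV" unfolding D_def P_def by (rule Dsum[OF g])
  have s1: "((\<lambda>(x, y). A x * P y) has_sum (p^2 * q * 1)) UNIV"
    by (rule has_sum_product_nonneg[OF _ _ hA hP]) (auto simp: A_def Pnn)
  have s2: "((\<lambda>(x, y). C x * D y) has_sum (V * (p + (1 - \<gamma>) * p^2 * q))) UNIV"
    by (rule has_sum_product_nonneg[OF _ _ hC hD]) (auto simp: C_def D_def Pnn)
  have s: "((\<lambda>z. (\<lambda>(x, y). A x * P y) z + (\<lambda>(x, y). C x * D y) z) has_sum (p^2 * q * 1 + V * (p + (1 - \<gamma>) * p^2 * q))) UNIV"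
    by (rule has_sum_add[OF s1 s2])
  have eq: "(\<lambda>(\<omega>, \<omega>'). outcome_prob p q \<gamma> \<omega> * outcome_prob p q \<gamma> \<omega>' * real (U_h n1 \<omega> \<omega>')) z
      = (\<lambda>(x, y). A x * P y) z + (\<lambda>(x, y). C x * D y) z" for z
  proof -
    obtain w c w' c' where z: "z = ((w, c), (w', c'))" by (metis prod.exhaust)
    show ?thesis
    proof (cases "P (w, c) = 0 \<or> P (w', c') = 0")
      case True
      then show ?thesis by (auto simp: z A_def C_def D_def P_def)
    next
      case False
      then have v: "valid_cycle w" "valid_cycle w'" using P_nz_valid unfolding P_def by blast+
      have "U_h n1 (w, c) (w', c') = U1 w + U2 n1 w c * (if Nn w' c' then 1 else 0)"
        by (rule U_h_char[OF v]) (use assms(6) in simp)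
      then show ?thesis by (simp add: z A_def C_def D_def P_def algebra_simps)
    qed
  qed
  have H: "((\<lambda>(\<omega>, \<omega>'). outcome_prob p q \<gamma> \<omega> * outcome_prob p q \<gamma> \<omega>' * real (U_h n1 \<omega> \<omega>')) has_sum (p^2 * q * 1 + V * (p + (1 - \<gamma>) * p^2 * q))) UNIV"
    using s by (subst has_sum_cong[where g = "\<lambda>z. (\<lambda>(x, y). A x * P y) z + (\<lambda>(x, y). C x * D y) z"]) (simp_all add: eq)
  have eqv: "p^2 * q * 1 + V * (p + (1 - \<gamma>) * p^2 * q) = p^2 * q + (p + (1 - \<gamma>) * p^2 * q) *
            ((q^2 / p) * (1 - q^(n1 - 1)) * \<gamma>
             + (1 - \<gamma>) * p * q^2 * (1 - (p * q)^(n1 - 1)) / (1 - p * q))"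
    by (simp add: V_def mult.commute)
  show ?thesis using H unfolding eqv .
qed


end
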